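(* Let $f(z)=\sum_{j\ge 1} b_j z^j$ be analytic in $\mathbb{D}$ with $\|f\|_{\mathcal{B}}\le 1$ and $b_j\ge 0$ for all $j\ge 1$. Then for every integer $n\ge 2$, $$ \mathcal{F}_n(f)=\sum_{k=1}^n k|b_k|^2\le n B_n^2, $$ and equality holds only for $f(z)=B_n z^n$.
   Context: $\mathbb{D}$ is the open unit disc. The Bloch space $\mathcal{B}$ consists of analytic functions $f$ on $\mathbb{D}$ with finite norm $\|f\|_{\mathcal{B}}=|f(0)|+\sup_{z\in\mathbb{D}}(1-|z|^2)|f'(z)|$. For $n\ge 2$, $B_n=\frac{n+1}{2n}\left(\frac{n+1}{n-1}\right)^{(n-1)/2}$ (this is the sharp bound for $|b_n|$ over functions $f=\sum_{k\ge1}b_kz^k$ with $\|f\|_{\mathcal{B}}\le 1$), and $B_1=1$. *)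

theory Defs
  imports "HOL-Analysis.Analysis"
begin

definition in_Bloch :: "(complex \<Rightarrow> complex) \<Rightarrow> bool" where
  "in_Bloch f \<longleftrightarrow> f holomorphic_on ball 0 1 \<and>
     bdd_above ((\<lambda>z. (1 - (cmod z)\<^sup>2) * cmod (deriv f z)) ` ball 0 1)"

definition bloch_norm :: "(complex \<Rightarrow> complex) \<Rightarrow> real" where
  "bloch_norm f = cmod (f 0) + (SUP z\<in>ball 0 1. (1 - (cmod z)\<^sup>2) * cmod (deriv f z))"

definition Bconst :: "nat \<Rightarrow> real" where
  "Bconst n = (if n = 1 then 1 else
     (real n + 1) / (2 * real n) * ((real n + 1) / (real n - 1)) powr ((real n - 1) / 2))"

end

theory Submission
  imports Defs
begin


lemma deriv_bound:
  fixes f :: "complex \<Rightarrow> complex" and b :: "nat \<Rightarrow> real" and r :: real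
  assumes sm: "\<And>z. z \<in> ball 0 1 \<Longrightarrow> (\<lambda>j. complex_of_real (b j) * z ^ j) sums f z"
    and bl: "in_Bloch f" and bn: "bloch_norm f \<le> 1"
    and nn: "\<And>j. j \<ge> 1 \<Longrightarrow> b j \<ge> 0"
    and r: "0 \<le> r" "r < 1"
  shows "summable (\<lambda>m. real (Suc m) * b (Suc m) * r^m) \<and>
         (1 - r^2) * (\<Sum>m. real (Suc m) * b (Suc m) * r^m) \<le> 1"
proof -
  define c where "c = (\<lambda>j. complex_of_real (b j))"
  have smc: "summable (\<lambda>n. c n * z ^ n)" if "norm z < 1" for z
    using sm[of z] that unfolding c_def by (auto simp: sums_iff)
  have feq: "f z = (\<Sum>n. c n * z ^ n)" if "z \<in> ball 0 1" for z
    using sm[OF that] unfolding c_def by (simp add: sums_iff)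
  have rin: "complex_of_real r \<in> ball 0 1" using r by auto
  have D1: "((\<lambda>z. \<Sum>n. c n * z^n) has_field_derivative (\<Sum>n. diffs c n * (complex_of_real r)^n)) (at (complex_of_real r))"
    by (rule termdiffs_strong'[where K=1]) (use smc rin in auto)
  have D2: "(f has_field_derivative (\<Sum>n. diffs c n * (complex_of_real r)^n)) (at (complex_of_real r))"
    by (rule has_field_derivative_transform_within_open[OF D1 _ rin]) (auto simp: feq)
  have dd: "\<And>n. diffs c n * (complex_of_real r)^n = complex_of_real (real (Suc n) * b (Suc n) * r^n)"
    by (simp add: diffs_def c_def)
  have sD: "summable (\<lambda>n. diffs c n * (complex_of_real r)^n)"
    by (rule termdiff_converges[where K=1]) (use smc rin in auto)
  hence sR: "summable (\<lambda>m. real (Suc m) * b (Suc m) * r^m)"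
    unfolding dd summable_complex_of_real .
  have "deriv f (complex_of_real r) = (\<Sum>n. diffs c n * (complex_of_real r)^n)"
    using D2 by (rule DERIV_imp_deriv)
  also have "\<dots> = complex_of_real (\<Sum>m. real (Suc m) * b (Suc m) * r^m)"
    unfolding dd by (rule suminf_of_real[symmetric, OF sR])
  finally have de: "deriv f (complex_of_real r) = complex_of_real (\<Sum>m. real (Suc m) * b (Suc m) * r^m)" .
  have pos: "0 \<le> (\<Sum>m. real (Suc m) * b (Suc m) * r^m)"
    by (rule suminf_nonneg[OF sR]) (use nn r in auto)
  have bdd: "bdd_above ((\<lambda>z. (1 - (cmod z)\<^sup>2) * cmod (deriv f z)) ` ball 0 1)"
    using bl unfolding in_Bloch_def by (rule conjunct2)
  have "(1 - (cmod (complex_of_real r))\<^sup>2) * cmod (deriv f (complex_of_real r))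
      \<le> (SUP z\<in>ball 0 1. (1 - (cmod z)\<^sup>2) * cmod (deriv f z))"
    by (rule cSUP_upper[OF rin bdd])
  also have "\<dots> \<le> 1" using bn unfolding bloch_norm_def by (smt (verit) norm_ge_zero)
  finally show ?thesis using sR de pos r by simp
qed



lemma ln_ineq:
  fixes x :: real assumes x: "x > 1"
  shows "2 / x \<le> ln (x+1) - ln (x-1)"
proof -
  define t where "t = 1 / x"
  have t: "0 < t" "t < 1" using x by (auto simp: t_def)
  define phi :: "real \<Rightarrow> real" where "phi = (\<lambda>u. ln (1+u) - ln (1-u) - 2*u)"
  have "phi 0 \<le> phi t"
  proof (rule DERIV_nonneg_imp_nondecreasing[of 0 t phi])
    fix u assume u: "0 \<le> u" "u \<le> t"
    hence s1: "u < 1" using t by auto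
    have "DERIV phi u :> (1/(1+u) + 1/(1-u) - 2)"
      unfolding phi_def using u s1
      by (auto intro!: derivative_eq_intros)
    moreover have "1/(1+u) + 1/(1-u) - 2 \<ge> 0"
    proof -
      have "1/(1+u) + 1/(1-u) - 2 = 2*u^2/((1+u)*(1-u))"
      proof -
        have "u*u \<le> u" using u s1 by (simp add: mult_left_le_one_le)
      hence "1 - u*u \<noteq> 0" using s1 by simp
      thus "1/(1+u) + 1/(1-u) - 2 = 2*u^2/((1+u)*(1-u))" using u s1 by (simp add: field_simps power2_eq_square)
      qed
      also have "\<dots> \<ge> 0" using u s1 by simp
      finally show ?thesis .
    qed
    ultimately show "\<exists>y. DERIV phi u :> y \<and> y \<ge> 0" by blast
  qed (use t in auto)
  hence "2*t \<le> ln (1+t) - ln (1-t)" by (simp add: phi_def)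
  moreover have "ln (x+1) = ln x + ln (1+t)" "ln (x-1) = ln x + ln (1-t)"
  proof -
    have "x+1 = x*(1+t)" "x-1 = x*(1-t)" using x by (auto simp: t_def field_simps)
    thus "ln (x+1) = ln x + ln (1+t)" "ln (x-1) = ln x + ln (1-t)"
      using x t by (simp_all add: ln_mult)
  qed
  ultimately show ?thesis by (simp add: t_def)
qed

definition LB :: "real \<Rightarrow> real" where
  "LB x = ln (x+1) - ln (2*x) + (x-1)/2 * (ln (x+1) - ln (x-1))"

lemma LB_deriv: "x > 1 \<Longrightarrow> DERIV LB x :> 1/2 * (ln (x+1) - ln (x-1)) - 1/x"
proof -
  assume x1: "x > 1"
  have d1: "DERIV (\<lambda>x. ln(x+1)) x :> 1/(x+1)" using x1
    by (auto intro!: derivative_eq_intros)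
  have d2: "DERIV (\<lambda>x. ln(2*x)) x :> 1/x" using x1
    by (auto intro!: derivative_eq_intros)
  have d4: "DERIV (\<lambda>x. ln(x-1)) x :> 1/(x-1)" using x1
    by (auto intro!: derivative_eq_intros)
  have d5: "DERIV (\<lambda>x. (x-1)/2) x :> 1/2" 
    by (auto intro!: derivative_eq_intros)
  have d3: "DERIV (\<lambda>x. (x-1)/2 * (ln (x+1) - ln (x-1))) x :> 1/2*(ln(x+1)-ln(x-1)) + (x-1)/2*(1/(x+1) - 1/(x-1))"
    by (rule DERIV_mult'[OF d5 DERIV_diff[OF d1 d4], THEN DERIV_cong]) simp
  have "DERIV LB x :> 1/(x+1) - 1/x + (1/2*(ln(x+1)-ln(x-1)) + (x-1)/2*(1/(x+1) - 1/(x-1)))"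
    unfolding LB_def[abs_def] by (rule DERIV_add[OF DERIV_diff[OF d1 d2] d3])
  moreover have "1/(x+1) - 1/x + (1/2*(ln(x+1)-ln(x-1)) + (x-1)/2*(1/(x+1) - 1/(x-1))) = 1/2 * (ln (x+1) - ln (x-1)) - 1/x"
  proof -
    have "(x-1)/2*(1/(x+1) - 1/(x-1)) = - 1/(x+1)" using x1 less_1_mult[OF x1 x1] by (simp add: field_simps)
    thus ?thesis by (simp only:)
  qed
  ultimately show ?thesis by (rule DERIV_cong)
qed

lemma LB_mono:
  fixes a b :: real assumes "1 < a" "a \<le> b" shows "LB a \<le> LB b"
proof (rule DERIV_nonneg_imp_nondecreasing[OF assms(2)])
  fix x assume x: "a \<le> x" "x \<le> b"
  hence x1: "x > 1" using assms by auto
  have "DERIV LB x :> 1/2 * (ln (x+1) - ln (x-1)) - 1/x" by (rule LB_deriv[OF x1])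
  moreover have "1/2 * (ln (x+1) - ln (x-1)) - 1/x \<ge> 0" using ln_ineq[OF x1] by simp
  ultimately show "\<exists>y. DERIV LB x :> y \<and> y \<ge> 0" by auto
qed

lemma Bconst_LB:
  assumes "k \<ge> 2" shows "Bconst k = exp (LB (real k))"
proof -
  have k: "real k > 1" using assms by simp
  have "Bconst k = (real k + 1) / (2 * real k) * ((real k + 1) / (real k - 1)) powr ((real k - 1) / 2)"
    using assms by (simp add: Bconst_def)
  also have "\<dots> = exp (ln (real k + 1) - ln (2 * real k)) * exp ((real k - 1) / 2 * (ln (real k + 1) - ln (real k - 1)))"
    using k by (simp add: powr_def exp_diff ln_div)
  also have "\<dots> = exp (LB (real k))" by (simp add: LB_def exp_add[symmetric])
  finally show ?thesis .
qed

lemma Bconst_ge1: "n \<ge> 2 \<Longrightarrow> Bconst n \<ge> 1"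
proof -
  assume n: "n \<ge> 2"
  have "Bconst 2 = 3/4 * sqrt 3" by (simp add: Bconst_def powr_half_sqrt)
  moreover have "sqrt 3 \<ge> 4/3" by (rule real_le_rsqrt) (simp add: power2_eq_square)
  ultimately have "Bconst 2 \<ge> 1" by simp
  moreover have "Bconst 2 \<le> Bconst n"
    using n LB_mono[of 2 "real n"] by (simp add: Bconst_LB)
  ultimately show ?thesis by simp
qed

lemma Bconst_mono: "1 \<le> k \<Longrightarrow> k \<le> n \<Longrightarrow> n \<ge> 2 \<Longrightarrow> Bconst k \<le> Bconst n"
proof -
  assume a: "1 \<le> k" "k \<le> n" "n \<ge> 2"
  show ?thesis
  proof (cases "k = 1")
    case True thus ?thesis using Bconst_ge1[OF a(3)] by (simp add: Bconst_def)
  next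
    case False
    hence "k \<ge> 2" using a by simp
    thus ?thesis using a LB_mono[of "real k" "real n"] by (simp add: Bconst_LB)
  qed
qed


lemma rk_identity:
  assumes k: "k \<ge> 2"
  defines "r \<equiv> sqrt ((real k - 1) / (real k + 1))"
  shows "0 < r" "r < 1" "real k * r^(k-1) * (1 - r^2) * Bconst k = 1"
proof -
  define q where "q = (real k - 1) / (real k + 1)"
  have q: "0 < q" "q < 1" using k by (auto simp: q_def)
  show "0 < r" "r < 1" using q by (auto simp: r_def q_def[symmetric])
  have r2: "r^2 = q" using q by (simp add: r_def q_def[symmetric])
  have rp: "r^(k-1) = q powr ((real k - 1)/2)"
  proof -
    have "r^(k-1) = (q powr (1/2))^(k-1)" using q by (simp add: r_def q_def[symmetric] powr_half_sqrt)
    also have "\<dots> = q powr (real (k-1) * (1/2))" using q by (simp add: powr_power)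
    finally show ?thesis using k by (simp add: of_nat_diff)
  qed
  have inv: "((real k + 1) / (real k - 1)) powr ((real k - 1) / 2) = 1 / q powr ((real k - 1)/2)"
  proof -
    have "(real k + 1) / (real k - 1) = 1 / q" by (simp add: q_def)
    thus ?thesis using q by (simp add: powr_divide)
  qed
  have "Bconst k = (real k + 1) / (2 * real k) / q powr ((real k - 1)/2)"
    using k by (simp add: Bconst_def inv)
  moreover have "1 - r^2 = 2 / (real k + 1)" using k by (simp add: r2 q_def field_simps)
  ultimately have "real k * r^(k-1) * (1 - r^2) * Bconst k = real k * q powr ((real k - 1)/2) * (2 / (real k + 1)) * ((real k + 1) / (2 * real k) / q powr ((real k - 1)/2))"
    by (simp only: rp)
  also have "\<dots> = 1"
  proof -
    have Q: "q powr ((real k - 1)/2) > 0" using q by simp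
    have kk: "real k > 0" using k by simp
    show ?thesis using Q kk by (simp add: field_simps) (metis Q kk add_pos_pos mult_pos_pos zero_less_numeral less_irrefl)
  qed
  finally show "real k * r^(k-1) * (1 - r^2) * Bconst k = 1" .
qed



theorem theorem2p2:
  fixes f :: "complex \<Rightarrow> complex" and b :: "nat \<Rightarrow> real" and n :: nat
  assumes "f holomorphic_on ball 0 1"
    and "b 0 = 0"
    and "\<And>z. z \<in> ball 0 1 \<Longrightarrow> (\<lambda>j. complex_of_real (b j) * z ^ j) sums f z"
    and "in_Bloch f"
    and "bloch_norm f \<le> 1"
    and "\<And>j. j \<ge> 1 \<Longrightarrow> b j \<ge> 0"
    and "n \<ge> 2"
  shows "(\<Sum>k=1..n. real k * \<bar>b k\<bar>\<^sup>2) \<le> real n * (Bconst n)\<^sup>2 \<and>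
         ((\<Sum>k=1..n. real k * \<bar>b k\<bar>\<^sup>2) = real n * (Bconst n)\<^sup>2 \<longrightarrow>
          (\<forall>z\<in>ball 0 1. f z = complex_of_real (Bconst n) * z ^ n))"
proof -
  note sm = assms(3) and bl = assms(4) and bn = assms(5) and nn = assms(6) and n2 = assms(7)
  define D where "D = (\<lambda>r::real. \<Sum>m. real (Suc m) * b (Suc m) * r^m)"
  define Bn where "Bn = Bconst n"
  have Bn1: "Bn \<ge> 1" using Bconst_ge1[OF n2] by (simp add: Bn_def)
  have DB: "summable (\<lambda>m. real (Suc m) * b (Suc m) * r^m) \<and> (1 - r^2) * D r \<le> 1"
    if "0 \<le> r" "r < 1" for r
    unfolding D_def by (rule deriv_bound[OF sm bl bn nn that])
  have tnn: "0 \<le> real (Suc m) * b (Suc m) * r^m" if "0 \<le> r" for r m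
    using nn[of "Suc m"] that by simp
  have bk: "b k \<le> Bn" if k: "1 \<le> k" "k \<le> n" for k
  proof (cases "k = 1")
    case True
    have "(1 - 0^2) * D 0 \<le> 1" using DB[of 0] by simp
    moreover have "D 0 = b 1" unfolding D_def using powser_zero[of "\<lambda>m. real (Suc m) * b (Suc m)"] by simp
    ultimately show ?thesis using True Bn1 by simp
  next
    case False
    hence k2: "k \<ge> 2" using k by simp
    define r where "r = sqrt ((real k - 1) / (real k + 1))"
    have r: "0 < r" "r < 1" "real k * r^(k-1) * (1 - r^2) * Bconst k = 1"
      using rk_identity[OF k2] unfolding r_def by auto
    have sr: "summable (\<lambda>m. real (Suc m) * b (Suc m) * r^m)" and Dr: "(1 - r^2) * D r \<le> 1"
      using DB[of r] r by auto
    have "sum (\<lambda>m. real (Suc m) * b (Suc m) * r^m) {k-1} \<le> D r"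
      unfolding D_def by (rule sum_le_suminf[OF sr]) (use tnn r in auto)
    hence "real k * b k * r^(k-1) \<le> D r" using k2 by (simp add: Suc_diff_1)
    hence "(1 - r^2) * (real k * b k * r^(k-1)) \<le> 1"
      using Dr r by (smt (verit) mult_left_mono power_le_one zero_le_power2 abs_square_less_1)
    hence "b k * (real k * r^(k-1) * (1 - r^2)) \<le> Bconst k * (real k * r^(k-1) * (1 - r^2))"
      using r(3) by (simp add: algebra_simps)
    moreover have "real k * r^(k-1) * (1 - r^2) > 0"
      using r k2 by (simp add: power_less_one_iff abs_square_less_1)
    ultimately have "b k \<le> Bconst k" by (rule mult_right_le_imp_le)
    also have "\<dots> \<le> Bn" unfolding Bn_def by (rule Bconst_mono) (use k n2 in auto)
    finally show ?thesis .
  qed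
  define r where "r = sqrt ((real n - 1) / (real n + 1))"
  have r: "0 < r" "r < 1" "real n * r^(n-1) * (1 - r^2) * Bn = 1"
    using rk_identity[OF n2] unfolding r_def Bn_def by auto
  have sr: "summable (\<lambda>m. real (Suc m) * b (Suc m) * r^m)" and Dr: "(1 - r^2) * D r \<le> 1"
    using DB[of r] r by auto
  have r2: "0 < 1 - r^2" using r by (simp add: power_less_one_iff abs_square_less_1)
  define S where "S = (\<Sum>m<n. real (Suc m) * b (Suc m) ^ 2)"
  define S1 where "S1 = (\<Sum>m<n. real (Suc m) * b (Suc m))"
  define P where "P = (\<Sum>m<n. real (Suc m) * b (Suc m) * r^m)"
  define Q where "Q = (\<Sum>m<n. real (Suc m) * b (Suc m) * r^(n-1))"
  have Seq: "(\<Sum>k=1..n. real k * \<bar>b k\<bar>\<^sup>2) = S"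
    unfolding S_def by (simp add: sum.atLeast1_atMost_eq)
  have SS1: "S \<le> Bn * S1"
    unfolding S_def S1_def sum_distrib_left
  proof (rule sum_mono)
    fix m assume m: "m \<in> {..<n}"
    have "b (Suc m) \<le> Bn" using bk[of "Suc m"] m by auto
    hence bb: "b (Suc m) * b (Suc m) \<le> Bn * b (Suc m)" using nn[of "Suc m"] by (simp add: mult_right_mono)
    show "real (Suc m) * b (Suc m) ^ 2 \<le> Bn * (real (Suc m) * b (Suc m))"
      using mult_left_mono[OF bb, of "real (Suc m)"] by (simp add: power2_eq_square algebra_simps)
  qed
  have QS1: "Q = S1 * r^(n-1)" unfolding Q_def S1_def by (simp add: sum_distrib_right)
  have QP: "Q \<le> P" unfolding Q_def P_def
  proof (rule sum_mono)
    fix m assume m: "m \<in> {..<n}"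
    have "r^(n-1) \<le> r^m" using m r by (intro power_decreasing) auto
    thus "real (Suc m) * b (Suc m) * r^(n-1) \<le> real (Suc m) * b (Suc m) * r^m"
      using tnn[of 1 m] nn[of "Suc m"] by (intro mult_left_mono) auto
  qed
  have PD: "P \<le> D r" unfolding P_def D_def by (rule sum_le_suminf[OF sr]) (use tnn r in auto)
  have c: "r^(n-1) * (1 - r^2) > 0" using r r2 by simp
  have S1le: "S1 * (r^(n-1) * (1 - r^2)) \<le> 1"
  proof -
    have "S1 * (r^(n-1) * (1 - r^2)) = Q * (1 - r^2)" by (simp add: QS1)
    also have "\<dots> \<le> D r * (1 - r^2)" using QP PD r2 by (intro mult_right_mono) auto
    finally show ?thesis using Dr by (simp add: mult.commute)
  qed
  have S1n: "S1 \<le> real n * Bn"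
  proof -
    have "S1 * (r^(n-1) * (1 - r^2)) \<le> (real n * Bn) * (r^(n-1) * (1 - r^2))"
      using S1le r(3) by (simp add: algebra_simps)
    thus ?thesis using c by (rule mult_right_le_imp_le)
  qed
  have main: "S \<le> real n * Bn^2"
  proof -
    have "S \<le> Bn * S1" by (rule SS1)
    also have "\<dots> \<le> Bn * (real n * Bn)" using S1n Bn1 by (intro mult_left_mono) auto
    finally show ?thesis by (simp add: power2_eq_square algebra_simps)
  qed
  show ?thesis
  proof (intro conjI impI)
    show "(\<Sum>k=1..n. real k * \<bar>b k\<bar>\<^sup>2) \<le> real n * (Bconst n)\<^sup>2" using main Seq Bn_def by simp
  next
    assume eq: "(\<Sum>k=1..n. real k * \<bar>b k\<bar>\<^sup>2) = real n * (Bconst n)\<^sup>2"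
    hence Seq2: "S = real n * Bn^2" using Seq Bn_def by simp
    have "Bn * (real n * Bn) \<le> Bn * S1" using SS1 Seq2 by (simp add: power2_eq_square algebra_simps)
    hence S1ge: "real n * Bn \<le> S1" using Bn1 by simp
    hence "1 \<le> S1 * (r^(n-1) * (1 - r^2))"
      using r(3) c mult_right_mono[OF S1ge, of "r^(n-1) * (1 - r^2)"] by (simp add: algebra_simps)
    hence "1 \<le> Q * (1 - r^2)" by (simp add: QS1 algebra_simps)
    moreover have "Q * (1 - r^2) \<le> P * (1 - r^2)" "P * (1 - r^2) \<le> D r * (1 - r^2)"
      using mult_right_mono[OF QP, of "1 - r^2"] mult_right_mono[OF PD, of "1 - r^2"] r2 by auto
    moreover have "D r * (1 - r^2) \<le> 1" using Dr by (simp add: mult.commute)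
    ultimately have "Q * (1 - r^2) = P * (1 - r^2)" "P * (1 - r^2) = D r * (1 - r^2)" by linarith+
    hence QPD: "Q = P" "P = D r" using r2 by auto
    have low: "b (Suc m) = 0" if m: "m < n - 1" for m
    proof -
      have "(\<Sum>m<n. real (Suc m) * b (Suc m) * (r^m - r^(n-1))) = P - Q"
        unfolding P_def Q_def by (simp add: sum_subtractf algebra_simps)
      hence z: "(\<Sum>m<n. real (Suc m) * b (Suc m) * (r^m - r^(n-1))) = 0" using QPD by simp
      have "\<forall>i\<in>{..<n}. real (Suc i) * b (Suc i) * (r^i - r^(n-1)) = 0"
      proof (subst sum_nonneg_eq_0_iff[symmetric])
        fix i assume "i \<in> {..<n}"
        hence "r^(n-1) \<le> r^i" using r by (intro power_decreasing) auto
        thus "0 \<le> real (Suc i) * b (Suc i) * (r^i - r^(n-1))" using nn[of "Suc i"] by simp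
      qed (use z in auto)
      hence "real (Suc m) * b (Suc m) * (r^m - r^(n-1)) = 0" using m by auto
      moreover have "r^(n-1) < r^m" using m r by (intro power_strict_decreasing) auto
      ultimately show ?thesis by simp
    qed
    have high: "b (Suc m) = 0" if m: "m \<ge> n" for m
    proof (rule ccontr)
      assume "b (Suc m) \<noteq> 0"
      hence "0 < real (Suc m) * b (Suc m) * r^m" using nn[of "Suc m"] r by simp
      hence "P < D r" unfolding P_def D_def
        using sum_less_suminf2[OF sr _ m] tnn r by auto
      thus False using QPD by simp
    qed
    have zero: "b j = 0" if "j \<noteq> n" for j
    proof (cases j)
      case 0 thus ?thesis using assms(2) by simp
    next
      case (Suc m)
      show ?thesis
      proof (cases "m < n - 1")
        case True thus ?thesis using low Suc by simp
      next
        case False hence "m \<ge> n" using that Suc n2 by auto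
        thus ?thesis using high Suc by simp
      qed
    qed
    have "S = real n * b n ^ 2"
    proof -
      have "S = (\<Sum>m<n. if m = n - 1 then real (Suc m) * b (Suc m) ^ 2 else 0)"
        unfolding S_def by (rule sum.cong) (use zero n2 in auto)
      also have "\<dots> = real n * b n ^ 2" using n2 by simp
      finally show ?thesis .
    qed
    hence "b n ^ 2 = Bn ^ 2" using Seq2 n2 by simp
    hence bnB: "b n = Bn" using nn[of n] n2 Bn1 by (simp add: power2_eq_iff)
    show "\<forall>z\<in>ball 0 1. f z = complex_of_real (Bconst n) * z ^ n"
    proof
      fix z :: complex assume z: "z \<in> ball 0 1"
      have "(\<lambda>j. complex_of_real (b j) * z ^ j) = (\<lambda>j. if j = n then complex_of_real (Bconst n) * z ^ j else 0)"
        using zero bnB Bn_def by auto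
      hence "(\<lambda>j. if j = n then complex_of_real (Bconst n) * z ^ j else 0) sums f z" using sm[OF z] by simp
      moreover have "(\<lambda>j. if j = n then complex_of_real (Bconst n) * z ^ j else 0) sums (complex_of_real (Bconst n) * z ^ n)"
        using sums_single[of n "\<lambda>j. complex_of_real (Bconst n) * z ^ j"] by simp
      ultimately show "f z = complex_of_real (Bconst n) * z ^ n" using sums_unique2 by blast
    qed
  qed
qed

end
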